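(* Let $\kappa>0$ and $\lambda\in\mathbb C\setminus\{0\}$. For every finite interval $\Lambda\subset\mathbb Z$ with $|\Lambda|\ge8$ or $|\Lambda|\in\{5,6\}$, $\ker H_\Lambda=\mathcal G_\Lambda$. For $|\Lambda|=7$, $\ker H_\Lambda=\mathcal G_\Lambda\oplus\operatorname{span}\{|1100011\rangle\}$.
   Context: $\mathcal H_\Lambda=\bigotimes_{x\in\Lambda}\mathbb C^2$ with basis $|1\rangle,|0\rangle$ per site and product basis $|\boldsymbol\sigma\rangle$; $n_x=|1\rangle\langle1|_x$, $\sigma^-_x=|0\rangle\langle1|_x$. For $\Lambda=[a,b]$, $H_\Lambda=\sum_{x=a}^{b-2}n_xn_{x+2}+\kappa\sum_{x=a}^{b-3}q_x^*q_x$ with $q_x=\sigma^-_{x+1}\sigma^-_{x+2}-\lambda\sigma^-_x\sigma^-_{x+3}$. Tiles occupy consecutive sites and carry 0/1 words: void $0$; monomer $100$; dimer $011000$; left boundary dimer $11000$ (only as first tile); and, only as last tile: right dimer $011$, right 1-monomer $1$, right 2-monomer $10$, truncated 1-dimer $0110$, truncated 2-dimer $01100$. A root tiling $R$ of $\Lambda$ is a tiling by consecutive voids and monomers, optionally with a left boundary dimer as first tile and optionally with one of right dimer, right 1-monomer, right 2-monomer as last tile; $\mathcal R_\Lambda$ is their set. A VMD tiling derived from $R$ is obtained by choosing disjoint pairs of consecutive tiles of $R$, each either two monomers (replaced by a dimer) or a monomer followed by a right $j$-monomer, $j\in\{1,2\}$ (replaced by the truncated $j$-dimer); $\mathcal D_\Lambda(R)$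 is their set, $\boldsymbol\sigma_\Lambda(\mathbf D)$ the concatenated content, $\#(\mathbf D)$ the number of tiles that are dimers, boundary dimers or truncated dimers, $\psi_\Lambda(R)=\sum_{\mathbf D\in\mathcal D_\Lambda(R)}\lambda^{\#(\mathbf D)}|\boldsymbol\sigma_\Lambda(\mathbf D)\rangle$ and $\mathcal G_\Lambda=\operatorname{span}\{\psi_\Lambda(R):R\in\mathcal R_\Lambda\}$. *)

theory Defs
  imports Complex_Main
begin

text \<open>Sites of an interval \<Lambda> = [a,b] of length n = b - a + 1 are labelled 0..n-1
  (site a+i is labelled i). Basis configurations are boolean lists of length n
  (True = |1>, False = |0>).\<close>

type_synonym state = "bool list \<Rightarrow> complex"

definition Hspace :: "nat \<Rightarrow> state set" where
  "Hspace n = {\<psi>. \<forall>\<sigma>. length \<sigma> \<noteq> n \<longrightarrow> \<psi> \<sigma> = 0}"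

definition ket :: "bool list \<Rightarrow> state" where
  "ket \<tau> = (\<lambda>\<sigma>. if \<sigma> = \<tau> then 1 else 0)"

definition num_op :: "nat \<Rightarrow> state \<Rightarrow> state" where
  "num_op x \<psi> = (\<lambda>\<sigma>. if x < length \<sigma> \<and> \<sigma> ! x then \<psi> \<sigma> else 0)"

definition lower_op :: "nat \<Rightarrow> state \<Rightarrow> state" where
  "lower_op x \<psi> = (\<lambda>\<sigma>. if x < length \<sigma> \<and> \<not> \<sigma> ! x then \<psi> (\<sigma>[x := True]) else 0)"

definition raise_op :: "nat \<Rightarrow> state \<Rightarrow> state" where
  "raise_op x \<psi> = (\<lambda>\<sigma>. if x < length \<sigma> \<and> \<sigma> ! x then \<psi> (\<sigma>[x := False]) else 0)"

definition q_op :: "complex \<Rightarrow> nat \<Rightarrow> state \<Rightarrow> state" where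
  "q_op lam x \<psi> = (\<lambda>\<sigma>. lower_op (x+1) (lower_op (x+2) \<psi>) \<sigma>
                       - lam * lower_op x (lower_op (x+3) \<psi>) \<sigma>)"

definition qstar_op :: "complex \<Rightarrow> nat \<Rightarrow> state \<Rightarrow> state" where
  "qstar_op lam x \<psi> = (\<lambda>\<sigma>. raise_op (x+2) (raise_op (x+1) \<psi>) \<sigma>
                       - cnj lam * raise_op (x+3) (raise_op x \<psi>) \<sigma>)"

definition Ham :: "nat \<Rightarrow> real \<Rightarrow> complex \<Rightarrow> state \<Rightarrow> state" where
  "Ham n \<kappa> lam \<psi> = (\<lambda>\<sigma>. (\<Sum>x<n-2. num_op x (num_op (x+2) \<psi>) \<sigma>)
        + complex_of_real \<kappa> * (\<Sum>x<n-3. qstar_op lam x (q_op lam x \<psi>) \<sigma>))"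

definition kerH :: "nat \<Rightarrow> real \<Rightarrow> complex \<Rightarrow> state set" where
  "kerH n \<kappa> lam = {\<psi> \<in> Hspace n. Ham n \<kappa> lam \<psi> = (\<lambda>_. 0)}"

definition cspan :: "state set \<Rightarrow> state set" where
  "cspan S = {v. \<exists>F c. finite F \<and> F \<subseteq> S \<and> v = (\<lambda>\<sigma>. \<Sum>u\<in>F. c u * u \<sigma>)}"

datatype tile = Void | Mono | Dimer | LBDimer | RDimer | RMono1 | RMono2 | TDimer1 | TDimer2

fun word :: "tile \<Rightarrow> bool list" where
  "word Void = [False]"
| "word Mono = [True, False, False]"
| "word Dimer = [False, True, True, False, False, False]"
| "word LBDimer = [True, True, False, False, False]"
| "word RDimer = [False, True, True]"
| "word RMono1 = [True]"
| "word RMono2 = [True, False]"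
| "word TDimer1 = [False, True, True, False]"
| "word TDimer2 = [False, True, True, False, False]"

definition content :: "tile list \<Rightarrow> bool list" where
  "content ts = concat (map word ts)"

definition is_root :: "tile list \<Rightarrow> bool" where
  "is_root ts \<longleftrightarrow> (\<exists>l m r. ts = l @ m @ r \<and> (l = [] \<or> l = [LBDimer])
      \<and> set m \<subseteq> {Void, Mono}
      \<and> (r = [] \<or> r = [RDimer] \<or> r = [RMono1] \<or> r = [RMono2]))"

definition roots :: "nat \<Rightarrow> tile list set" where
  "roots n = {ts. is_root ts \<and> length (content ts) = n}"

inductive derived :: "tile list \<Rightarrow> tile list \<Rightarrow> bool" where
  derived_Nil: "derived [] []"
| derived_keep: "derived ts ds \<Longrightarrow> derived (t # ts) (t # ds)"
| derived_dimer: "derived ts ds \<Longrightarrow> derived (Mono # Mono # ts) (Dimer # ds)"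
| derived_trunc1: "derived ts ds \<Longrightarrow> derived (Mono # RMono1 # ts) (TDimer1 # ds)"
| derived_trunc2: "derived ts ds \<Longrightarrow> derived (Mono # RMono2 # ts) (TDimer2 # ds)"

definition ndimers :: "tile list \<Rightarrow> nat" where
  "ndimers ds = length (filter (\<lambda>t. t \<in> {Dimer, LBDimer, TDimer1, TDimer2}) ds)"

definition psi :: "complex \<Rightarrow> tile list \<Rightarrow> state" where
  "psi lam R = (\<lambda>\<sigma>. \<Sum>D\<in>{D. derived R D}. if content D = \<sigma> then lam ^ ndimers D else 0)"

definition Gspace :: "nat \<Rightarrow> complex \<Rightarrow> state set" where
  "Gspace n lam = cspan (psi lam ` roots n)"

end

theory Submission
  imports Defs
begin


lemma content_Nil[simp]: "content [] = []" by (simp add: content_def)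
lemma content_Cons[simp]: "content (t # D) = word t @ content D" by (simp add: content_def)
lemma content_append[simp]: "content (A @ B) = content A @ content B" by (simp add: content_def)

fun und :: "tile list \<Rightarrow> tile list" where
  "und [] = []"
| "und (Dimer # D) = Mono # Mono # und D"
| "und (TDimer1 # D) = Mono # RMono1 # und D"
| "und (TDimer2 # D) = Mono # RMono2 # und D"
| "und (t # D) = t # und D"

fun mid :: "tile list \<Rightarrow> bool" where
  "mid [] = True"
| "mid (t # D) = (if D = [] then t \<noteq> LBDimer else t \<in> {Void, Mono, Dimer} \<and> mid D)"

fun rm :: "tile list \<Rightarrow> bool" where
  "rm [] = True"
| "rm (t # R) = (if R = [] then t \<in> {Void, Mono, RDimer, RMono1, RMono2} else t \<in> {Void, Mono} \<and> rm R)"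

definition vmd :: "tile list \<Rightarrow> bool" where
  "vmd D \<longleftrightarrow> mid D \<or> (\<exists>D'. D = LBDimer # D' \<and> mid D')"

lemma S1: "mid D \<Longrightarrow> content D = True # True # r \<Longrightarrow> False"
  by (cases D) (auto, case_tac a, auto split: if_splits)

lemma S1': "mid D \<Longrightarrow> True # True # r = content D \<Longrightarrow> False"
  using S1 by metis

lemma S2: "mid D \<Longrightarrow> content D = True # r \<Longrightarrow> (\<exists>D'. D = Mono # D' \<and> mid D') \<or> D = [RMono1] \<or> D = [RMono2]"
  apply (cases D)
   apply simp
  apply (rename_tac t D')
  apply (case_tac t)
  apply (auto split: if_splits)
  done

lemma mid_ConsI: "t \<in> {Void, Mono, Dimer} \<Longrightarrow> mid X \<Longrightarrow> mid (t # X)"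
  by auto

lemma und_Cons: "und (t # D) = und [t] @ und D"
  by (cases t) auto

lemma nd_Cons: "ndimers (t # D) = ndimers [t] + ndimers D"
  by (simp add: ndimers_def)

lemma app_split1: "w @ c = pre @ P @ post \<Longrightarrow> length w \<le> length pre \<Longrightarrow>
    pre = w @ drop (length w) pre \<and> c = drop (length w) pre @ P @ post"
  by (auto simp: append_eq_append_conv_if) (metis append_take_drop_id)

lemma app_split2: "w @ c = pre @ P @ post \<Longrightarrow> length pre < length w \<Longrightarrow>
    \<exists>k. k = length pre \<and> k < length w \<and> drop k w @ c = P @ post"
  by (auto simp: append_eq_append_conv_if)

lemma NN: "mid D \<Longrightarrow> content D = pre @ [True, b, True] @ post \<Longrightarrow> False"
proof (induction D arbitrary: pre)
  case Nil then show ?case by simp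
next
  case (Cons t D)
  have eq: "word t @ content D = pre @ [True, b, True] @ post" using Cons.prems(2) by simp
  show ?case
  proof (cases "length (word t) \<le> length pre")
    case True
    from app_split1[OF eq True] have "content D = drop (length (word t)) pre @ [True, b, True] @ post" by auto
    moreover have "mid D" using Cons.prems(1) by (auto split: if_splits)
    ultimately show ?thesis using Cons.IH by blast
  next
    case False
    then obtain k where k: "k = length pre" "k < length (word t)" "drop k (word t) @ content D = [True, b, True] @ post"
      using app_split2[OF eq] False by auto
    have DN: "t \<notin> {Void, Mono, Dimer} \<Longrightarrow> D = []" using Cons.prems(1) by (auto split: if_splits)
    show ?thesis using k DN
      by (cases t) (auto simp: less_Suc_eq numeral_eq_Suc)
  qed
qed

lemma mid_tail: "mid (t # D) \<Longrightarrow> mid D"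
  by (auto split: if_splits)

lemma mid_cons_nonempty: "mid (t # D) \<Longrightarrow> D \<noteq> [] \<Longrightarrow> t \<in> {Void, Mono, Dimer}"
  by auto

lemma M1: "mid D \<Longrightarrow> content D = pre @ [False, True, True, False] @ post \<Longrightarrow>
  \<exists>D'. mid D' \<and> und D' = und D \<and> ndimers D = Suc (ndimers D') \<and> content D' = pre @ [True, False, False, True] @ post"
proof (induction D arbitrary: pre)
  case Nil then show ?case by simp
next
  case (Cons t D)
  have eq: "word t @ content D = pre @ [False, True, True, False] @ post" using Cons.prems(2) by simp
  have mD: "mid D" using Cons.prems(1) by (rule mid_tail)
  show ?case
  proof (cases "length (word t) \<le> length pre")
    case True
    from app_split1[OF eq True] have pre: "pre = word t @ drop (length (word t)) pre"
      and c: "content D = drop (length (word t)) pre @ [False, True, True, False] @ post" by auto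
    then obtain D'' where D'': "mid D''" "und D'' = und D" "ndimers D = Suc (ndimers D'')"
      "content D'' = drop (length (word t)) pre @ [True, False, False, True] @ post"
      using Cons.IH[OF mD] by blast
    have "D \<noteq> []" using c by auto
    then have "t \<in> {Void, Mono, Dimer}" using Cons.prems(1) by auto
    then have "mid (t # D'')" using D''(1) by auto
    moreover have "und (t # D'') = und (t # D)" using D''(2) by (metis und_Cons)
    moreover have "ndimers (t # D) = Suc (ndimers (t # D''))" using D''(3) by (metis nd_Cons add_Suc_right)
    moreover have "content (t # D'') = pre @ [True, False, False, True] @ post"
      using D''(4) pre by simp
    ultimately show ?thesis by blast
  next
    case False
    then obtain k where k: "k = length pre" "k < length (word t)" "drop k (word t) @ content D = [False, True, True, False] @ post"
      using app_split2[OF eq] by auto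
    have DN: "t \<notin> {Void, Mono, Dimer} \<Longrightarrow> D = []" using Cons.prems(1) by (auto split: if_splits)
    have k0: "k = 0" "t \<in> {Dimer, TDimer1, TDimer2}" using k DN
      by (cases t; auto simp: less_Suc_eq numeral_eq_Suc dest: S1[OF mD])+
    have pre0: "pre = []" using k0 k by auto
    show ?thesis
    proof (cases t)
      case Dimer
      then have "post = [False, False] @ content D" using k k0 by auto
      then show ?thesis using Cons.prems(1) Dimer pre0
        by (intro exI[of _ "Mono # Mono # D"]) (auto simp: ndimers_def split: if_splits)
    next
      case TDimer1
      then show ?thesis using k k0 DN pre0
        by (intro exI[of _ "[Mono, RMono1]"]) (auto simp: ndimers_def)
    next
      case TDimer2
      then show ?thesis using k k0 DN pre0
        by (intro exI[of _ "[Mono, RMono2]"]) (auto simp: ndimers_def)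
    qed (use k0 in auto)
  qed
qed

lemma M2: "mid D \<Longrightarrow> content D = pre @ [True, False, False, True] @ post \<Longrightarrow>
  \<exists>D'. mid D' \<and> und D' = und D \<and> ndimers D' = Suc (ndimers D) \<and> content D' = pre @ [False, True, True, False] @ post"
proof (induction D arbitrary: pre)
  case Nil then show ?case by simp
next
  case (Cons t D)
  have eq: "word t @ content D = pre @ [True, False, False, True] @ post" using Cons.prems(2) by simp
  have mD: "mid D" using Cons.prems(1) by (rule mid_tail)
  show ?case
  proof (cases "length (word t) \<le> length pre")
    case True
    from app_split1[OF eq True] have pre: "pre = word t @ drop (length (word t)) pre"
      and c: "content D = drop (length (word t)) pre @ [True, False, False, True] @ post" by auto
    then obtain D'' where D'': "mid D''" "und D'' = und D" "ndimers D'' = Suc (ndimers D)"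
      "content D'' = drop (length (word t)) pre @ [False, True, True, False] @ post"
      using Cons.IH[OF mD] by blast
    have "D \<noteq> []" using c by auto
    then have "t \<in> {Void, Mono, Dimer}" using Cons.prems(1) by auto
    then have "mid (t # D'')" using D''(1) by auto
    moreover have "und (t # D'') = und (t # D)" using D''(2) by (metis und_Cons)
    moreover have "ndimers (t # D'') = Suc (ndimers (t # D))" using D''(3) by (metis nd_Cons add_Suc_right)
    moreover have "content (t # D'') = pre @ [False, True, True, False] @ post"
      using D''(4) pre by simp
    ultimately show ?thesis by blast
  next
    case False
    then obtain k where k: "k = length pre" "k < length (word t)" "drop k (word t) @ content D = [True, False, False, True] @ post"
      using app_split2[OF eq] by auto
    have DN: "t \<notin> {Void, Mono, Dimer} \<Longrightarrow> D = []" using Cons.prems(1) by (auto split: if_splits)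
    have k0: "k = 0" "t = Mono" using k DN
      by (cases t; auto simp: less_Suc_eq numeral_eq_Suc)+
    have pre0: "pre = []" using k0 k by auto
    have cD: "content D = True # post" using k k0 by auto
    from S2[OF mD cD] show ?thesis
    proof (elim disjE exE conjE)
      fix D2 assume D2: "D = Mono # D2" "mid D2"
      then have "post = [False, False] @ content D2" using cD by auto
      then show ?thesis using D2 k0 pre0
        by (intro exI[of _ "Dimer # D2"]) (auto simp: ndimers_def)
    next
      assume "D = [RMono1]"
      then show ?thesis using cD k0 pre0
        by (intro exI[of _ "[TDimer1]"]) (auto simp: ndimers_def)
    next
      assume "D = [RMono2]"
      then show ?thesis using cD k0 pre0
        by (intro exI[of _ "[TDimer2]"]) (auto simp: ndimers_def)
    qed
  qed
qed

lemma word_ne[simp]: "word t \<noteq> []"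
  by (cases t) auto

lemma content_empty_iff[simp]: "content D = [] \<longleftrightarrow> D = []"
  by (cases D) auto

lemma mid_inj: "mid D1 \<Longrightarrow> mid D2 \<Longrightarrow> content D1 = content D2 \<Longrightarrow> D1 = D2"
proof (induction D1 arbitrary: D2)
  case Nil then show ?case by (metis content_empty_iff)
next
  case (Cons t D)
  then obtain t2 E where D2: "D2 = t2 # E" by (cases D2) auto
  have mD: "mid D" using Cons.prems(1) by (rule mid_tail)
  have mE: "mid E" using Cons.prems(2) D2 by (auto intro: mid_tail)
  have eq: "word t @ content D = word t2 @ content E" using Cons.prems(3) D2 by simp
  have DN: "t \<notin> {Void, Mono, Dimer} \<Longrightarrow> D = []" using Cons.prems(1) by (auto split: if_splits)
  have EN: "t2 \<notin> {Void, Mono, Dimer} \<Longrightarrow> E = []" using Cons.prems(2) D2 by (auto split: if_splits)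
  have "t = t2" using eq DN EN
    by (cases t; cases t2; auto dest: S1[OF mD] S1[OF mE] S1'[OF mD] S1'[OF mE])
  then show ?case using eq Cons.IH[OF mD mE] D2 by simp
qed

lemma vmd_inj: "vmd D1 \<Longrightarrow> vmd D2 \<Longrightarrow> content D1 = content D2 \<Longrightarrow> D1 = D2"
  unfolding vmd_def
  by (auto dest: mid_inj) (metis S1 content_Cons word.simps(4) append_Cons)+

lemma rm_app: "set m \<subseteq> {Void, Mono} \<Longrightarrow> (r = [] \<or> r = [RDimer] \<or> r = [RMono1] \<or> r = [RMono2]) \<Longrightarrow> rm (m @ r)"
  by (induction m) auto

lemma rm_dec: "rm R \<Longrightarrow> \<exists>m r. R = m @ r \<and> set m \<subseteq> {Void, Mono} \<and> (r = [] \<or> r = [RDimer] \<or> r = [RMono1] \<or> r = [RMono2])"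
proof (induction R)
  case Nil then show ?case by auto
next
  case (Cons t R)
  show ?case
  proof (cases "R = []")
    case True
    show ?thesis
    proof (cases "t \<in> {Void, Mono}")
      case True
      then show ?thesis using \<open>R = []\<close> by (intro exI[of _ "[t]"] exI[of _ "[]"]) auto
    next
      case False
      then have "t \<in> {RDimer, RMono1, RMono2}" using Cons.prems \<open>R = []\<close> by auto
      then show ?thesis using \<open>R = []\<close> by (intro exI[of _ "[]"] exI[of _ "[t]"]) auto
    qed
  next
    case False
    then obtain m r where "R = m @ r" "set m \<subseteq> {Void, Mono}" "r = [] \<or> r = [RDimer] \<or> r = [RMono1] \<or> r = [RMono2]"
      using Cons by auto
    moreover have "t \<in> {Void, Mono}" using Cons.prems False by auto
    ultimately show ?thesis by (intro exI[of _ "t # m"] exI[of _ r]) auto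
  qed
qed

lemma is_root_iff: "is_root R \<longleftrightarrow> rm R \<or> (\<exists>R'. R = LBDimer # R' \<and> rm R')"
proof
  assume "is_root R"
  then obtain l m r where R: "R = l @ m @ r" "l = [] \<or> l = [LBDimer]" "set m \<subseteq> {Void, Mono}"
    "r = [] \<or> r = [RDimer] \<or> r = [RMono1] \<or> r = [RMono2]"
    unfolding is_root_def by blast
  have "rm (m @ r)" using rm_app[OF R(3) R(4)] .
  then show "rm R \<or> (\<exists>R'. R = LBDimer # R' \<and> rm R')"
    using R(1,2) by auto
next
  assume "rm R \<or> (\<exists>R'. R = LBDimer # R' \<and> rm R')"
  then obtain l R' where lR: "R = l @ R'" "l = [] \<or> l = [LBDimer]" "rm R'"
    by (metis append_Cons append_Nil)
  then obtain m r where "R' = m @ r" "set m \<subseteq> {Void, Mono}" "r = [] \<or> r = [RDimer] \<or> r = [RMono1] \<or> r = [RMono2]"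
    using rm_dec by blast
  then show "is_root R" unfolding is_root_def using lR
    by (intro exI[of _ l] exI[of _ m] exI[of _ r]) auto
qed

lemma derived_Nil_iff[simp]: "derived [] D \<longleftrightarrow> D = []"
  by (auto elim: derived.cases intro: derived.intros)

lemma und_empty_iff[simp]: "und D = [] \<longleftrightarrow> D = []"
  by (cases D rule: und.cases) auto

lemma U1m: "derived R D \<Longrightarrow> rm R \<Longrightarrow> mid D \<and> und D = R"
proof (induction rule: derived.induct)
  case derived_Nil then show ?case by simp
next
  case (derived_keep ts ds t)
  show ?case
  proof (cases "ts = []")
    case True
    then have "ds = []" using derived_keep.hyps by simp
    then show ?thesis using True derived_keep.prems by (cases t) auto
  next
    case False
    then have "t \<in> {Void, Mono}" "rm ts" using derived_keep.prems by auto
    then have "mid ds" "und ds = ts" using derived_keep.IH by auto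
    then show ?thesis using False \<open>t \<in> {Void, Mono}\<close> by auto
  qed
next
  case (derived_dimer ts ds)
  then have "rm ts" by (cases ts) (auto split: if_splits)
  then show ?case using derived_dimer by (cases ds) auto
next
  case (derived_trunc1 ts ds)
  then have "ts = []" by (auto split: if_splits)
  then show ?case using derived_trunc1 by auto
next
  case (derived_trunc2 ts ds)
  then have "ts = []" by (auto split: if_splits)
  then show ?case using derived_trunc2 by auto
qed

lemma derived_LB: "derived (LBDimer # R') D \<Longrightarrow> \<exists>D'. D = LBDimer # D' \<and> derived R' D'"
  by (auto elim: derived.cases)

lemma U1: "is_root R \<Longrightarrow> derived R D \<Longrightarrow> vmd D \<and> und D = R"
  unfolding is_root_iff vmd_def
  by (auto dest!: derived_LB dest: U1m)

lemma U2m: "mid D \<Longrightarrow> rm (und D) \<and> derived (und D) D"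
proof (induction D)
  case Nil then show ?case by (simp add: derived_Nil)
next
  case (Cons t D)
  show ?case
  proof (cases "D = []")
    case True
    then show ?thesis using Cons.prems
      by (cases t) (auto intro: derived.intros)
  next
    case False
    then have t: "t \<in> {Void, Mono, Dimer}" "mid D" using Cons.prems by auto
    then have IH: "rm (und D)" "derived (und D) D" using Cons.IH by auto
    have "und D \<noteq> []" using False by simp
    then show ?thesis using t IH by (auto intro: derived.intros)
  qed
qed

lemma U2: "vmd D \<Longrightarrow> is_root (und D) \<and> derived (und D) D"
  unfolding vmd_def is_root_iff
  by (auto dest: U2m) (meson U2m derived_keep)

lemma len_und: "length (content (und D)) = length (content D)"
  by (induction D rule: und.induct) auto

lemma derived_len: "derived R D \<Longrightarrow> length D \<le> length R"
  by (induction rule: derived.induct) auto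

lemma UNIV_tile: "(UNIV :: tile set) = {Void, Mono, Dimer, LBDimer, RDimer, RMono1, RMono2, TDimer1, TDimer2}"
  apply auto apply (case_tac x) apply auto done

lemma finite_tile[simp]: "finite (UNIV :: tile set)"
  by (simp add: UNIV_tile)

lemma finite_lists_le: "finite {D :: tile list. length D \<le> k}"
  using finite_lists_length_le[OF finite_tile, of k] by simp

lemma finite_derived: "finite {D. derived R D}"
  by (rule finite_subset[OF _ finite_lists_le[of "length R"]]) (auto dest: derived_len)

lemma psi_no: "(\<And>D. derived R D \<Longrightarrow> content D \<noteq> \<sigma>) \<Longrightarrow> psi lam R \<sigma> = 0"
  unfolding psi_def by (rule sum.neutral) auto

lemma psi_yes: "is_root R \<Longrightarrow> derived R D \<Longrightarrow> psi lam R (content D) = lam ^ ndimers D"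
proof -
  assume r: "is_root R" and d: "derived R D"
  have "psi lam R (content D) = (\<Sum>D'\<in>{D. derived R D}. if D' = D then lam ^ ndimers D else 0)"
    unfolding psi_def
  proof (rule sum.cong[OF refl])
    fix D' assume "D' \<in> {D. derived R D}"
    then have "vmd D'" using U1[OF r] by auto
    moreover have "vmd D" using U1[OF r d] by auto
    ultimately show "(if content D' = content D then lam ^ ndimers D' else 0) = (if D' = D then lam ^ ndimers D else 0)"
      using vmd_inj by auto
  qed
  also have "\<dots> = lam ^ ndimers D"
    using finite_derived d by (simp add: sum.delta')
  finally show ?thesis .
qed

lemma LB_split: "[True, True, False, False, False] @ c = pre @ P @ post \<Longrightarrow> mid D' \<Longrightarrow> c = content D' \<Longrightarrow>
   (\<exists>pre'. pre = [True, True, False, False, False] @ pre' \<and> c = pre' @ P @ post)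
   \<or> (\<exists>k. k < 5 \<and> k = length pre \<and> drop k [True, True, False, False, False] @ c = P @ post)"
  using app_split1[of "[True, True, False, False, False]" c pre P post]
        app_split2[of "[True, True, False, False, False]" c pre P post]
  by (cases "5 \<le> length pre") auto

lemma vmd_cases: "vmd D \<Longrightarrow> (mid D \<Longrightarrow> P) \<Longrightarrow> (\<And>D'. D = LBDimer # D' \<Longrightarrow> mid D' \<Longrightarrow> P) \<Longrightarrow> P"
  by (auto simp: vmd_def)

lemma NNv: "vmd D \<Longrightarrow> content D = pre @ [True, b, True] @ post \<Longrightarrow> False"
  unfolding vmd_def
proof (elim disjE exE conjE)
  assume "mid D" "content D = pre @ [True, b, True] @ post" then show False by (rule NN)
next
  fix D' assume D: "D = LBDimer # D'" "mid D'" "content D = pre @ [True, b, True] @ post"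
  then have eq: "[True, True, False, False, False] @ content D' = pre @ [True, b, True] @ post" by simp
  from LB_split[OF eq D(2) refl] show False
  proof (elim disjE exE conjE)
    fix pre' assume "content D' = pre' @ [True, b, True] @ post" then show False using NN D(2) by blast
  next
    fix k assume "k < 5" "drop k [True, True, False, False, False] @ content D' = [True, b, True] @ post"
    then show False by (auto simp: less_Suc_eq numeral_eq_Suc)
  qed
qed

lemma M1v: assumes "vmd D" "content D = pre @ [False, True, True, False] @ post"
  shows "\<exists>D'. vmd D' \<and> und D' = und D \<and> ndimers D = Suc (ndimers D') \<and> content D' = pre @ [True, False, False, True] @ post"
proof (rule vmd_cases[OF assms(1)])
  assume "mid D"
  then show ?thesis using M1[OF \<open>mid D\<close> assms(2)] unfolding vmd_def by blast
next
  fix D' assume D: "D = LBDimer # D'" "mid D'"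
  then have eq: "[True, True, False, False, False] @ content D' = pre @ [False, True, True, False] @ post" using assms(2) by simp
  from LB_split[OF eq D(2) refl] show ?thesis
  proof (elim disjE exE conjE)
    fix pre' assume pre': "pre = [True, True, False, False, False] @ pre'" "content D' = pre' @ [False, True, True, False] @ post"
    then obtain D'' where D'': "mid D''" "und D'' = und D'" "ndimers D' = Suc (ndimers D'')"
      "content D'' = pre' @ [True, False, False, True] @ post" using M1[OF D(2)] by blast
    then show ?thesis using D pre'
      by (intro exI[of _ "LBDimer # D''"]) (auto simp: ndimers_def vmd_def)
  next
    fix k assume "k < 5" "drop k [True, True, False, False, False] @ content D' = [False, True, True, False] @ post"
    then show ?thesis by (auto simp: less_Suc_eq numeral_eq_Suc dest: S1[OF D(2)])
  qed
qed

lemma M2v: assumes "vmd D" "content D = pre @ [True, False, False, True] @ post"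
  shows "\<exists>D'. vmd D' \<and> und D' = und D \<and> ndimers D' = Suc (ndimers D) \<and> content D' = pre @ [False, True, True, False] @ post"
proof (rule vmd_cases[OF assms(1)])
  assume "mid D"
  then show ?thesis using M2[OF \<open>mid D\<close> assms(2)] unfolding vmd_def by blast
next
  fix D' assume D: "D = LBDimer # D'" "mid D'"
  then have eq: "[True, True, False, False, False] @ content D' = pre @ [True, False, False, True] @ post" using assms(2) by simp
  from LB_split[OF eq D(2) refl] show ?thesis
  proof (elim disjE exE conjE)
    fix pre' assume pre': "pre = [True, True, False, False, False] @ pre'" "content D' = pre' @ [True, False, False, True] @ post"
    then obtain D'' where D'': "mid D''" "und D'' = und D'" "ndimers D'' = Suc (ndimers D')"
      "content D'' = pre' @ [False, True, True, False] @ post" using M2[OF D(2)] by blast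
    then show ?thesis using D pre'
      by (intro exI[of _ "LBDimer # D''"]) (auto simp: ndimers_def vmd_def)
  next
    fix k assume "k < 5" "drop k [True, True, False, False, False] @ content D' = [True, False, False, True] @ post"
    then show ?thesis by (auto simp: less_Suc_eq numeral_eq_Suc dest: S1[OF D(2)])
  qed
qed



definition nopat :: "bool list \<Rightarrow> bool" where
  "nopat \<sigma> \<longleftrightarrow> (\<forall>pre b post. \<sigma> \<noteq> pre @ [True, b, True] @ post)
     \<and> (\<forall>pre post. \<sigma> \<noteq> pre @ [True, False, False, True, True] @ post)
     \<and> (\<forall>pre post. \<sigma> \<noteq> pre @ [True, True, False, False, True] @ post)
     \<and> (\<forall>pre post. \<sigma> \<noteq> pre @ [True, True, False, False, False, True, True] @ post)"

lemma nopat_drop: "nopat (c @ s) \<Longrightarrow> nopat s"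
  unfolding nopat_def
proof (intro conjI allI notI; elim conjE)
  fix pre b post
  assume "\<forall>pre b post. c @ s \<noteq> pre @ [True, b, True] @ post" "s = pre @ [True, b, True] @ post"
  then show False by (metis append.assoc)
next
  fix pre post
  assume "\<forall>pre post. c @ s \<noteq> pre @ [True, False, False, True, True] @ post" "s = pre @ [True, False, False, True, True] @ post"
  then show False by (metis append.assoc)
next
  fix pre post
  assume "\<forall>pre post. c @ s \<noteq> pre @ [True, True, False, False, True] @ post" "s = pre @ [True, True, False, False, True] @ post"
  then show False by (metis append.assoc)
next
  fix pre post
  assume "\<forall>pre post. c @ s \<noteq> pre @ [True, True, False, False, False, True, True] @ post" "s = pre @ [True, True, False, False, False, True, True] @ post"
  then show False by (metis append.assoc)
qed

lemma nopat_Cons: "nopat (a # s) \<Longrightarrow> nopat s"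
  using nopat_drop[of "[a]" s] by simp

lemma nopat_nn: "nopat \<sigma> \<Longrightarrow> \<sigma> = pre @ [True, b, True] @ post \<Longrightarrow> False"
  unfolding nopat_def by blast
lemma nopat_p1: "nopat \<sigma> \<Longrightarrow> \<sigma> = pre @ [True, False, False, True, True] @ post \<Longrightarrow> False"
  unfolding nopat_def by blast
lemma nopat_p2: "nopat \<sigma> \<Longrightarrow> \<sigma> = pre @ [True, True, False, False, True] @ post \<Longrightarrow> False"
  unfolding nopat_def by blast
lemma nopat_p3: "nopat \<sigma> \<Longrightarrow> \<sigma> = pre @ [True, True, False, False, False, True, True] @ post \<Longrightarrow> False"
  unfolding nopat_def by blast

lemma MP: "nopat \<sigma> \<Longrightarrow> (\<forall>r. \<sigma> \<noteq> True # True # r) \<Longrightarrow> \<exists>D. mid D \<and> content D = \<sigma>"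
proof (induction "length \<sigma>" arbitrary: \<sigma> rule: less_induct)
  case less
  note np = less.prems(1)
  show ?case
  proof (cases \<sigma>)
    case Nil then show ?thesis by (intro exI[of _ "[]"]) auto
  next
    case (Cons a s)
    show ?thesis
    proof (cases a)
      case False
      show ?thesis
      proof (cases "\<exists>s'. s = True # True # s'")
        case True
        then obtain s' where s: "s = True # True # s'" by blast
        show ?thesis
        proof (cases s')
          case Nil then show ?thesis using Cons s False by (intro exI[of _ "[RDimer]"]) auto
        next
          case (Cons b1 s1)
          have b1: "\<not> b1" using nopat_nn[OF np, of "[False]" True s1] \<open>\<sigma> = a # s\<close> s Cons False by auto
          show ?thesis
          proof (cases s1)
            case Nil then show ?thesis using \<open>\<sigma> = a # s\<close> s Cons False b1 by (intro exI[of _ "[TDimer1]"]) auto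
          next
            case (Cons b2 s2)
            have b2: "\<not> b2" using nopat_nn[OF np, of "[False, True]" False s2] \<open>\<sigma> = a # s\<close> s \<open>s' = b1 # s1\<close> Cons False b1 by auto
            show ?thesis
            proof (cases s2)
              case Nil then show ?thesis using \<open>\<sigma> = a # s\<close> s \<open>s' = b1 # s1\<close> \<open>s1 = b2 # s2\<close> False b1 b2
                by (intro exI[of _ "[TDimer2]"]) auto
            next
              case (Cons b3 s3)
              have sig: "\<sigma> = [False, True, True, False, False, b3] @ s3"
                using \<open>\<sigma> = a # s\<close> s \<open>s' = b1 # s1\<close> \<open>s1 = b2 # s2\<close> Cons False b1 b2 by auto
              have b3: "\<not> b3" using nopat_p2[OF np, of "[False]" s3] sig by auto
              have np3: "nopat s3" using nopat_drop[of "[False, True, True, False, False, b3]" s3] np sig by simp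
              have nTT: "\<forall>r. s3 \<noteq> True # True # r"
                using nopat_p3[OF np, of "[False]"] sig b3 by auto
              obtain D where "mid D" "content D = s3"
                using less.hyps[OF _ np3 nTT] sig by auto
              then show ?thesis using sig b3 by (intro exI[of _ "Dimer # D"]) auto
            qed
          qed
        qed
      next
        case nTT: False
        have nps: "nopat s" using nopat_Cons np \<open>\<sigma> = a # s\<close> by blast
        obtain D where "mid D" "content D = s"
          using less.hyps[OF _ nps] nTT \<open>\<sigma> = a # s\<close> by auto
        then show ?thesis using \<open>\<sigma> = a # s\<close> False
          by (intro exI[of _ "Void # D"]) (auto simp: mid_ConsI)
      qed
    next
      case True
      show ?thesis
      proof (cases s)
        case Nil then show ?thesis using \<open>\<sigma> = a # s\<close> True by (intro exI[of _ "[RMono1]"]) auto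
      next
        case (Cons b1 s1)
        have b1: "\<not> b1" using less.prems(2) \<open>\<sigma> = a # s\<close> True Cons by auto
        show ?thesis
        proof (cases s1)
          case Nil then show ?thesis using \<open>\<sigma> = a # s\<close> True \<open>s = b1 # s1\<close> b1 by (intro exI[of _ "[RMono2]"]) auto
        next
          case (Cons b2 s2)
          have sig: "\<sigma> = [True, False, b2] @ s2" using \<open>\<sigma> = a # s\<close> True \<open>s = b1 # s1\<close> b1 Cons by auto
          have b2: "\<not> b2" using nopat_nn[OF np, of "[]" False s2] sig by auto
          have np2: "nopat s2" using nopat_drop[of "[True, False, b2]" s2] np sig by simp
          have nTT: "\<forall>r. s2 \<noteq> True # True # r"
            using nopat_p1[OF np, of "[]"] sig b2 by auto
          obtain D where "mid D" "content D = s2"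
            using less.hyps[OF _ np2 nTT] sig by auto
          then show ?thesis using sig b2 by (intro exI[of _ "Mono # D"]) (auto simp: mid_ConsI)
        qed
      qed
    qed
  qed
qed

lemma PL: "5 \<le> length \<sigma> \<Longrightarrow> nopat \<sigma> \<Longrightarrow> \<exists>D. vmd D \<and> content D = \<sigma>"
proof -
  assume len: "5 \<le> length \<sigma>" and np: "nopat \<sigma>"
  show ?thesis
  proof (cases "\<exists>r. \<sigma> = True # True # r")
    case False
    then show ?thesis using MP[OF np] unfolding vmd_def by blast
  next
    case True
    then obtain r where r: "\<sigma> = True # True # r" by blast
    then obtain b1 b2 b3 s where s: "r = b1 # b2 # b3 # s" using len
      by (cases r; cases "tl r"; cases "tl (tl r)") auto
    have b1: "\<not> b1" using nopat_nn[OF np, of "[]" True "b2 # b3 # s"] r s by auto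
    have b2: "\<not> b2" using nopat_nn[OF np, of "[True]" False "b3 # s"] r s b1 by auto
    have b3: "\<not> b3" using nopat_p2[OF np, of "[]" s] r s b1 b2 by auto
    have sig: "\<sigma> = [True, True, False, False, False] @ s" using r s b1 b2 b3 by simp
    have nps: "nopat s" using nopat_drop[of "[True, True, False, False, False]" s] np sig by simp
    have nTT: "\<forall>r. s \<noteq> True # True # r" using nopat_p3[OF np, of "[]"] sig by auto
    obtain D where "mid D" "content D = s" using MP[OF nps nTT] by blast
    then show ?thesis using sig unfolding vmd_def by (intro exI[of _ "LBDimer # D"]) auto
  qed
qed



definition kcond :: "nat \<Rightarrow> complex \<Rightarrow> state \<Rightarrow> bool" where
  "kcond n lam \<psi> \<longleftrightarrow> \<psi> \<in> Hspace n
     \<and> (\<forall>pre b post. \<psi> (pre @ [True, b, True] @ post) = 0)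
     \<and> (\<forall>pre post. \<psi> (pre @ [False, True, True, False] @ post) = lam * \<psi> (pre @ [True, False, False, True] @ post))"

lemma q_eval: "q_op lam (length pre) \<psi> (pre @ [a, b, c, d] @ post) =
   (if \<not> b \<and> \<not> c then \<psi> (pre @ [a, True, True, d] @ post) else 0)
   - lam * (if \<not> a \<and> \<not> d then \<psi> (pre @ [True, b, c, True] @ post) else 0)"
  by (simp add: q_op_def lower_op_def nth_append list_update_append)

lemma num_eval: "num_op (length pre) (num_op (length pre + 2) \<psi>) (pre @ [a, b, c] @ post) =
   (if a \<and> c then \<psi> (pre @ [a, b, c] @ post) else 0)"
  by (simp add: num_op_def nth_append)

lemma decomp3: "i + 2 < length \<sigma> \<Longrightarrow> \<sigma> = take i \<sigma> @ [\<sigma>!i, \<sigma>!(i+1), \<sigma>!(i+2)] @ drop (i+3) \<sigma>"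
proof -
  assume h: "i + 2 < length \<sigma>"
  have d: "\<And>j. j < length \<sigma> \<Longrightarrow> drop j \<sigma> = \<sigma>!j # drop (j+1) \<sigma>"
    by (simp add: Cons_nth_drop_Suc)
  have "drop i \<sigma> = \<sigma>!i # \<sigma>!(i+1) # \<sigma>!(i+2) # drop (i+3) \<sigma>"
    using h d[of i] d[of "i+1"] d[of "i+2"] by (simp add: numeral_eq_Suc)
  then show ?thesis by (metis append_Cons append_Nil append_take_drop_id)
qed

lemma decomp4: "i + 3 < length \<sigma> \<Longrightarrow> \<sigma> = take i \<sigma> @ [\<sigma>!i, \<sigma>!(i+1), \<sigma>!(i+2), \<sigma>!(i+3)] @ drop (i+4) \<sigma>"
proof -
  assume h: "i + 3 < length \<sigma>"
  have d: "\<And>j. j < length \<sigma> \<Longrightarrow> drop j \<sigma> = \<sigma>!j # drop (j+1) \<sigma>"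
    by (simp add: Cons_nth_drop_Suc)
  have "drop i \<sigma> = \<sigma>!i # \<sigma>!(i+1) # \<sigma>!(i+2) # \<sigma>!(i+3) # drop (i+4) \<sigma>"
    using h d[of i] d[of "i+1"] d[of "i+2"] d[of "i+3"] by (simp add: numeral_eq_Suc)
  then show ?thesis by (metis append_Cons append_Nil append_take_drop_id)
qed

lemma Hspace_zero: "\<psi> \<in> Hspace n \<Longrightarrow> length \<sigma> \<noteq> n \<Longrightarrow> \<psi> \<sigma> = 0"
  by (simp add: Hspace_def)

lemma kcond_num: "kcond n lam \<psi> \<Longrightarrow> num_op x (num_op (x+2) \<psi>) \<sigma> = 0"
proof -
  assume k: "kcond n lam \<psi>"
  show ?thesis
  proof (cases "x + 2 < length \<sigma>")
    case True
    let ?pre = "take x \<sigma>"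
    have lp: "length ?pre = x" using True by simp
    have s: "\<sigma> = ?pre @ [\<sigma>!x, \<sigma>!(x+1), \<sigma>!(x+2)] @ drop (x+3) \<sigma>" using decomp3[OF True] .
    have "num_op x (num_op (x+2) \<psi>) \<sigma> = num_op (length ?pre) (num_op (length ?pre + 2) \<psi>) (?pre @ [\<sigma>!x, \<sigma>!(x+1), \<sigma>!(x+2)] @ drop (x+3) \<sigma>)"
      using lp s by simp
    also have "\<dots> = 0" unfolding num_eval using k unfolding kcond_def by auto
    finally show ?thesis .
  next
    case False
    then show ?thesis by (simp add: num_op_def)
  qed
qed

lemma kcond_q: "kcond n lam \<psi> \<Longrightarrow> x + 3 < n \<Longrightarrow> q_op lam x \<psi> \<tau> = 0"
proof -
  assume k: "kcond n lam \<psi>" and xn: "x + 3 < n"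
  have H: "\<psi> \<in> Hspace n" and K2: "\<And>pre b post. \<psi> (pre @ [True, b, True] @ post) = 0"
    and K3: "\<And>pre post. \<psi> (pre @ [False, True, True, False] @ post) = lam * \<psi> (pre @ [True, False, False, True] @ post)"
    using k unfolding kcond_def by auto
  show ?thesis
  proof (cases "length \<tau> = n")
    case False
    then show ?thesis using Hspace_zero[OF H] by (simp add: q_op_def lower_op_def)
  next
    case True
    then have xt: "x + 3 < length \<tau>" using xn by simp
    let ?pre = "take x \<tau>" and ?post = "drop (x+4) \<tau>"
    obtain a b c d where abcd: "\<tau> = ?pre @ [a, b, c, d] @ ?post" using decomp4[OF xt] by blast
    have lp: "length ?pre = x" using xt by simp
    have "q_op lam x \<psi> \<tau> = q_op lam (length ?pre) \<psi> (?pre @ [a, b, c, d] @ ?post)" using lp abcd by simp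
    also have "\<dots> = 0"
      unfolding q_eval
    proof -
      have e1: "\<psi> (?pre @ [a, True, True, d] @ ?post) = 0" if "a \<or> d"
        using that K2[of ?pre True "d # ?post"] K2[of "?pre @ [a]" True ?post] by (cases a) auto
      have e2: "\<psi> (?pre @ [True, b, c, True] @ ?post) = 0" if "b \<or> c"
        using that K2[of "?pre @ [True]" c ?post] K2[of ?pre b "True # ?post"] by (cases b) auto
      show "(if \<not> b \<and> \<not> c then \<psi> (?pre @ [a, True, True, d] @ ?post) else 0) -
          lam * (if \<not> a \<and> \<not> d then \<psi> (?pre @ [True, b, c, True] @ ?post) else 0) = 0"
        using e1 e2 K3[of ?pre ?post] by auto
    qed
    finally show ?thesis .
  qed
qed

lemma kcond_ker: "kcond n lam \<psi> \<Longrightarrow> \<psi> \<in> kerH n \<kappa> lam"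
proof -
  assume k: "kcond n lam \<psi>"
  have "Ham n \<kappa> lam \<psi> = (\<lambda>_. 0)"
  proof
    fix \<sigma>
    have "\<And>x. x < n - 3 \<Longrightarrow> q_op lam x \<psi> = (\<lambda>_. 0)" using kcond_q[OF k] by fastforce
    then have "\<And>x. x < n - 3 \<Longrightarrow> qstar_op lam x (q_op lam x \<psi>) \<sigma> = 0"
      by (simp add: qstar_op_def raise_op_def)
    then show "Ham n \<kappa> lam \<psi> \<sigma> = 0"
      unfolding Ham_def using kcond_num[OF k] by simp
  qed
  then show ?thesis using k unfolding kerH_def kcond_def by simp
qed



definition ip :: "nat \<Rightarrow> state \<Rightarrow> state \<Rightarrow> complex" where
  "ip n \<phi> \<chi> = (\<Sum>\<sigma>\<in>{\<sigma>. length \<sigma> = n}. cnj (\<phi> \<sigma>) * \<chi> \<sigma>)"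

lemma finite_L[simp]: "finite {\<sigma>::bool list. length \<sigma> = n}"
  using finite_lists_length_eq[of "UNIV :: bool set" n] by simp

lemma ip_raise: "ip n \<phi> (raise_op y \<chi>) = ip n (lower_op y \<phi>) \<chi>"
proof -
  let ?L = "{\<sigma>::bool list. length \<sigma> = n}"
  let ?S = "{\<sigma> \<in> ?L. y < length \<sigma> \<and> \<sigma>!y}" and ?T = "{\<sigma> \<in> ?L. y < length \<sigma> \<and> \<not> \<sigma>!y}"
  have "ip n \<phi> (raise_op y \<chi>) = (\<Sum>\<sigma>\<in>?L. if y < length \<sigma> \<and> \<sigma>!y then cnj (\<phi> \<sigma>) * \<chi> (\<sigma>[y := False]) else 0)"
    unfolding ip_def raise_op_def by (rule sum.cong) auto
  also have "\<dots> = (\<Sum>\<sigma>\<in>?S. cnj (\<phi> \<sigma>) * \<chi> (\<sigma>[y := False]))"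
    by (rule sum.inter_filter[symmetric]) simp
  also have "\<dots> = (\<Sum>\<tau>\<in>?T. cnj (\<phi> (\<tau>[y := True])) * \<chi> \<tau>)"
  proof (rule sum.reindex_bij_witness[of _ "\<lambda>\<tau>. \<tau>[y := True]" "\<lambda>\<sigma>. \<sigma>[y := False]"])
    fix a assume "a \<in> ?S" then show "(a[y := False])[y := True] = a" by simp (metis list_update_id)
  next
    fix a assume "a \<in> ?S" then show "a[y := False] \<in> ?T" by simp
  next
    fix b assume "b \<in> ?T" then show "(b[y := True])[y := False] = b" by simp (metis list_update_id)
  next
    fix b assume "b \<in> ?T" then show "b[y := True] \<in> ?S" by simp
  next
    fix a assume "a \<in> ?S" then show "cnj (\<phi> ((a[y := False])[y := True])) * \<chi> (a[y := False]) = cnj (\<phi> a) * \<chi> (a[y := False])"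
      by simp (metis list_update_id)
  qed
  also have "\<dots> = (\<Sum>\<tau>\<in>?L. if y < length \<tau> \<and> \<not> \<tau>!y then cnj (\<phi> (\<tau>[y := True])) * \<chi> \<tau> else 0)"
    by (rule sum.inter_filter) simp
  also have "\<dots> = ip n (lower_op y \<phi>) \<chi>"
    unfolding ip_def lower_op_def by (rule sum.cong) auto
  finally show ?thesis .
qed

lemma ip_diff2: "ip n \<psi> (\<lambda>\<sigma>. A \<sigma> - c * B \<sigma>) = ip n \<psi> A - c * ip n \<psi> B"
  unfolding ip_def by (simp add: right_diff_distrib sum_subtractf sum_distrib_left mult.left_commute)

lemma ip_diff1: "ip n (\<lambda>\<sigma>. A \<sigma> - c * B \<sigma>) \<phi> = ip n A \<phi> - cnj c * ip n B \<phi>"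
  unfolding ip_def by (simp add: left_diff_distrib sum_subtractf sum_distrib_left mult.assoc)

lemma ip_qstar: "ip n \<psi> (qstar_op lam x \<phi>) = ip n (q_op lam x \<psi>) \<phi>"
proof -
  have "ip n \<psi> (qstar_op lam x \<phi>) = ip n \<psi> (raise_op (x+2) (raise_op (x+1) \<phi>)) - cnj lam * ip n \<psi> (raise_op (x+3) (raise_op x \<phi>))"
    unfolding qstar_op_def by (rule ip_diff2)
  also have "\<dots> = ip n (lower_op (x+1) (lower_op (x+2) \<psi>)) \<phi> - cnj lam * ip n (lower_op x (lower_op (x+3) \<psi>)) \<phi>"
    by (simp add: ip_raise)
  also have "\<dots> = ip n (q_op lam x \<psi>) \<phi>"
    unfolding q_op_def by (rule ip_diff1[symmetric])
  finally show ?thesis .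
qed

lemma ip_self: "ip n \<phi> \<phi> = complex_of_real (\<Sum>\<sigma>\<in>{\<sigma>. length \<sigma> = n}. (cmod (\<phi> \<sigma>))\<^sup>2)"
  unfolding ip_def of_real_sum
proof (rule sum.cong[OF refl])
  fix x show "cnj (\<phi> x) * \<phi> x = complex_of_real ((cmod (\<phi> x))\<^sup>2)"
    by (subst complex_norm_square) (rule mult.commute)
qed

lemma ip_num: "ip n \<psi> (num_op x (num_op (x+2) \<psi>)) = ip n (num_op x (num_op (x+2) \<psi>)) (num_op x (num_op (x+2) \<psi>))"
  unfolding ip_def by (rule sum.cong) (auto simp: num_op_def)

lemma ip_Ham: "ip n \<psi> (Ham n \<kappa> lam \<psi>) = (\<Sum>x<n-2. ip n \<psi> (num_op x (num_op (x+2) \<psi>)))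
   + complex_of_real \<kappa> * (\<Sum>x<n-3. ip n \<psi> (qstar_op lam x (q_op lam x \<psi>)))"
proof -
  let ?L = "{\<sigma>::bool list. length \<sigma> = n}"
  have "ip n \<psi> (Ham n \<kappa> lam \<psi>) = (\<Sum>\<sigma>\<in>?L. \<Sum>x<n-2. cnj (\<psi> \<sigma>) * num_op x (num_op (x+2) \<psi>) \<sigma>)
     + complex_of_real \<kappa> * (\<Sum>\<sigma>\<in>?L. \<Sum>x<n-3. cnj (\<psi> \<sigma>) * qstar_op lam x (q_op lam x \<psi>) \<sigma>)"
    unfolding ip_def Ham_def by (simp add: distrib_left sum.distrib sum_distrib_left mult.left_commute)
  also have "\<dots> = (\<Sum>x<n-2. \<Sum>\<sigma>\<in>?L. cnj (\<psi> \<sigma>) * num_op x (num_op (x+2) \<psi>) \<sigma>)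
     + complex_of_real \<kappa> * (\<Sum>x<n-3. \<Sum>\<sigma>\<in>?L. cnj (\<psi> \<sigma>) * qstar_op lam x (q_op lam x \<psi>) \<sigma>)"
    by (simp only: sum.swap[of _ ?L])
  finally show ?thesis unfolding ip_def .
qed

lemma ker_kcond:
  assumes "\<kappa> > 0" "\<psi> \<in> kerH n \<kappa> lam"
  shows "kcond n lam \<psi>"
proof -
  let ?L = "{\<sigma>::bool list. length \<sigma> = n}"
  have H: "\<psi> \<in> Hspace n" and Z: "Ham n \<kappa> lam \<psi> = (\<lambda>_. 0)" using assms(2) unfolding kerH_def by auto
  define a where "a x = (\<Sum>\<sigma>\<in>?L. (cmod (num_op x (num_op (x+2) \<psi>) \<sigma>))\<^sup>2)" for x
  define b where "b x = (\<Sum>\<sigma>\<in>?L. (cmod (q_op lam x \<psi> \<sigma>))\<^sup>2)" for x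
  have "ip n \<psi> (Ham n \<kappa> lam \<psi>) = 0" unfolding Z ip_def by simp
  moreover have "ip n \<psi> (Ham n \<kappa> lam \<psi>) = complex_of_real ((\<Sum>x<n-2. a x) + \<kappa> * (\<Sum>x<n-3. b x))"
    unfolding ip_Ham ip_num ip_qstar ip_self a_def b_def by (simp add: of_real_sum)
  ultimately have "complex_of_real ((\<Sum>x<n-2. a x) + \<kappa> * (\<Sum>x<n-3. b x)) = 0" by simp
  then have s0: "(\<Sum>x<n-2. a x) + \<kappa> * (\<Sum>x<n-3. b x) = 0" by (simp only: of_real_eq_0_iff)
  have an: "\<And>x. 0 \<le> a x" unfolding a_def by (auto intro: sum_nonneg)
  have bn: "\<And>x. 0 \<le> b x" unfolding b_def by (auto intro: sum_nonneg)
  have sa: "0 \<le> (\<Sum>x<n-2. a x)" using an by (simp add: sum_nonneg)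
  have sb: "0 \<le> \<kappa> * (\<Sum>x<n-3. b x)" using bn assms(1) by (simp add: sum_nonneg)
  have A0: "(\<Sum>x<n-2. a x) = 0" and kB0: "\<kappa> * (\<Sum>x<n-3. b x) = 0" using s0 sa sb by linarith+
  have B0: "(\<Sum>x<n-3. b x) = 0" using kB0 assms(1) by simp
  have ax: "a x = 0" if "x < n - 2" for x using A0 an that by (simp add: sum_nonneg_eq_0_iff)
  have bx: "b x = 0" if "x < n - 3" for x using B0 bn that by (simp add: sum_nonneg_eq_0_iff)
  have N0: "num_op x (num_op (x+2) \<psi>) \<sigma> = 0" if "x < n - 2" "length \<sigma> = n" for x \<sigma>
    using ax[OF that(1)] that(2) unfolding a_def by (simp add: sum_nonneg_eq_0_iff)
  have Q0: "q_op lam x \<psi> \<sigma> = 0" if "x < n - 3" "length \<sigma> = n" for x \<sigma>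
    using bx[OF that(1)] that(2) unfolding b_def by (simp add: sum_nonneg_eq_0_iff)
  have K2: "\<psi> (pre @ [True, b, True] @ post) = 0" for pre b post
  proof (cases "length (pre @ [True, b, True] @ post) = n")
    case True
    then have "length pre < n - 2" by auto
    from N0[OF this True] show ?thesis using num_eval[of pre \<psi> True b True post] by simp
  next
    case False then show ?thesis using Hspace_zero[OF H] by blast
  qed
  have K3: "\<psi> (pre @ [False, True, True, False] @ post) = lam * \<psi> (pre @ [True, False, False, True] @ post)" for pre post
  proof (cases "length (pre @ [False, False, False, False] @ post) = n")
    case True
    then have "length pre < n - 3" by auto
    from Q0[OF this True] show ?thesis using q_eval[of lam pre \<psi> False False False False post] by simp
  next
    case False then show ?thesis using Hspace_zero[OF H] by simp
  qed
  show ?thesis unfolding kcond_def using H K2 K3 by blast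
qed




lemma sum_if_subset: "finite B \<Longrightarrow> A \<subseteq> B \<Longrightarrow> (\<Sum>x\<in>B. if x \<in> A then f x else 0) = (\<Sum>x\<in>A. f x)"
proof -
  assume fB: "finite B" and AB: "A \<subseteq> B"
  have "(\<Sum>x\<in>B. if x \<in> A then f x else 0) = (\<Sum>x\<in>{x\<in>B. x \<in> A}. f x)"
    using sum.inter_filter[OF fB, of f "\<lambda>x. x \<in> A"] by simp
  also have "{x\<in>B. x \<in> A} = A" using AB by auto
  finally show ?thesis .
qed

lemma cspan_zero: "(\<lambda>_. 0) \<in> cspan S"
  unfolding cspan_def by (rule CollectI, rule exI[of _ "{}"]) auto

lemma cspan_base: "u \<in> S \<Longrightarrow> u \<in> cspan S"
  unfolding cspan_def by (rule CollectI, rule exI[of _ "{u}"], rule exI[of _ "\<lambda>_. 1"]) auto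

lemma cspan_mono: "S \<subseteq> T \<Longrightarrow> v \<in> cspan S \<Longrightarrow> v \<in> cspan T"
  unfolding cspan_def by blast

lemma cspan_smult: "v \<in> cspan S \<Longrightarrow> (\<lambda>\<sigma>. a * v \<sigma>) \<in> cspan S"
proof -
  assume "v \<in> cspan S"
  then obtain F c where F: "finite F" "F \<subseteq> S" "v = (\<lambda>\<sigma>. \<Sum>u\<in>F. c u * u \<sigma>)" unfolding cspan_def by blast
  then show ?thesis unfolding cspan_def
    by (intro CollectI exI[of _ F] exI[of _ "\<lambda>u. a * c u"]) (auto simp: sum_distrib_left mult.assoc)
qed

lemma cspan_add: "v \<in> cspan S \<Longrightarrow> w \<in> cspan S \<Longrightarrow> (\<lambda>\<sigma>. v \<sigma> + w \<sigma>) \<in> cspan S"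
proof -
  assume "v \<in> cspan S" "w \<in> cspan S"
  then obtain F1 c1 F2 c2 where F1: "finite F1" "F1 \<subseteq> S" "v = (\<lambda>\<sigma>. \<Sum>u\<in>F1. c1 u * u \<sigma>)"
    and F2: "finite F2" "F2 \<subseteq> S" "w = (\<lambda>\<sigma>. \<Sum>u\<in>F2. c2 u * u \<sigma>)" unfolding cspan_def by blast
  let ?c = "\<lambda>u. (if u \<in> F1 then c1 u else 0) + (if u \<in> F2 then c2 u else 0)"
  have "(\<lambda>\<sigma>. v \<sigma> + w \<sigma>) = (\<lambda>\<sigma>. \<Sum>u\<in>F1 \<union> F2. ?c u * u \<sigma>)"
  proof
    fix \<sigma>
    have "(\<Sum>u\<in>F1 \<union> F2. ?c u * u \<sigma>) = (\<Sum>u\<in>F1 \<union> F2. (if u \<in> F1 then c1 u * u \<sigma> else 0))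
        + (\<Sum>u\<in>F1 \<union> F2. (if u \<in> F2 then c2 u * u \<sigma> else 0))"
      by (subst sum.distrib[symmetric]) (rule sum.cong, auto simp: distrib_right)
    also have "\<dots> = v \<sigma> + w \<sigma>"
      using F1 F2 by (simp add: sum_if_subset)
    finally show "v \<sigma> + w \<sigma> = (\<Sum>u\<in>F1 \<union> F2. ?c u * u \<sigma>)" by simp
  qed
  then show ?thesis unfolding cspan_def using F1 F2
    by (intro CollectI exI[of _ "F1 \<union> F2"] exI[of _ ?c]) auto
qed

lemma cspan_sum: "finite A \<Longrightarrow> (\<And>R. R \<in> A \<Longrightarrow> g R \<in> cspan S) \<Longrightarrow> (\<lambda>\<sigma>. \<Sum>R\<in>A. f R * g R \<sigma>) \<in> cspan S"
proof (induction A rule: finite_induct)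
  case empty then show ?case using cspan_zero by simp
next
  case (insert x F)
  have "(\<lambda>\<sigma>. f x * g x \<sigma> + (\<Sum>R\<in>F. f R * g R \<sigma>)) \<in> cspan S"
    using insert by (intro cspan_add cspan_smult) auto
  then show ?case using insert by simp
qed

lemma kcond_cspan: "(\<And>u. u \<in> S \<Longrightarrow> kcond n lam u) \<Longrightarrow> v \<in> cspan S \<Longrightarrow> kcond n lam v"
proof -
  assume k: "\<And>u. u \<in> S \<Longrightarrow> kcond n lam u" and "v \<in> cspan S"
  then obtain F c where F: "finite F" "F \<subseteq> S" "v = (\<lambda>\<sigma>. \<Sum>u\<in>F. c u * u \<sigma>)" unfolding cspan_def by blast
  have ku: "kcond n lam u" if "u \<in> F" for u using k F(2) that by blast
  have H: "v \<in> Hspace n" unfolding Hspace_def F(3)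
    using ku by (auto simp: kcond_def Hspace_def intro!: sum.neutral)
  have K2: "v (pre @ [True, b, True] @ post) = 0" for pre b post
    unfolding F(3) using ku by (auto simp: kcond_def intro!: sum.neutral)
  have K3: "v (pre @ [False, True, True, False] @ post) = lam * v (pre @ [True, False, False, True] @ post)" for pre post
    unfolding F(3) sum_distrib_left
    by (rule sum.cong[OF refl]) (use ku in \<open>auto simp: kcond_def\<close>)
  show ?thesis unfolding kcond_def using H K2 K3 by blast
qed



abbreviation KK :: "bool list" where "KK \<equiv> [True, True, False, False, False, True, True]"

lemma len_content_ge: "length R \<le> length (content R)"
proof (induction R)
  case (Cons t R) then show ?case using word_ne[of t] by (cases "word t") auto
qed simp

lemma finite_roots: "finite (roots n)"
  by (rule finite_subset[OF _ finite_lists_le[of n]]) (auto simp: roots_def intro: le_trans[OF len_content_ge])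

lemma psi_support: "is_root R \<Longrightarrow> psi lam R \<sigma> \<noteq> 0 \<Longrightarrow> \<exists>D. derived R D \<and> content D = \<sigma>"
  using psi_no by blast

lemma psi_kcond: "R \<in> roots n \<Longrightarrow> kcond n lam (psi lam R)"
proof -
  assume "R \<in> roots n"
  then have r: "is_root R" and lR: "length (content R) = n" by (auto simp: roots_def)
  have H: "psi lam R \<in> Hspace n"
    unfolding Hspace_def
  proof (intro CollectI allI impI)
    fix \<sigma> :: "bool list" assume "length \<sigma> \<noteq> n"
    show "psi lam R \<sigma> = 0"
    proof (rule psi_no)
      fix D assume d: "derived R D"
      then have "und D = R" using U1[OF r] by auto
      then have "length (content D) = n" using lR len_und[of D] by simp
      then show "content D \<noteq> \<sigma>" using \<open>length \<sigma> \<noteq> n\<close> by auto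
    qed
  qed
  have K2: "psi lam R (pre @ [True, b, True] @ post) = 0" for pre b post
  proof (rule psi_no)
    fix D assume d: "derived R D"
    show "content D \<noteq> pre @ [True, b, True] @ post"
    proof
      assume c: "content D = pre @ [True, b, True] @ post"
      have "vmd D" using U1[OF r d] by blast
      then show False using NNv c by blast
    qed
  qed
  have K3: "psi lam R (pre @ [False, True, True, False] @ post) = lam * psi lam R (pre @ [True, False, False, True] @ post)" for pre post
  proof (cases "\<exists>D. derived R D \<and> content D = pre @ [False, True, True, False] @ post")
    case True
    then obtain D where d: "derived R D" "content D = pre @ [False, True, True, False] @ post" by blast
    have v: "vmd D" "und D = R" using U1[OF r d(1)] by auto
    obtain D' where D': "vmd D'" "und D' = und D" "ndimers D = Suc (ndimers D')" "content D' = pre @ [True, False, False, True] @ post"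
      using M1v[OF v(1) d(2)] by blast
    have d': "derived R D'" using U2[OF D'(1)] D'(2) v(2) by simp
    show ?thesis using psi_yes[OF r d(1)] psi_yes[OF r d'] d(2) D'(3,4) by simp
  next
    case False
    have "\<not> (\<exists>D. derived R D \<and> content D = pre @ [True, False, False, True] @ post)"
    proof
      assume "\<exists>D. derived R D \<and> content D = pre @ [True, False, False, True] @ post"
      then obtain D where d: "derived R D" "content D = pre @ [True, False, False, True] @ post" by blast
      have v: "vmd D" "und D = R" using U1[OF r d(1)] by auto
      obtain D' where D': "vmd D'" "und D' = und D" "content D' = pre @ [False, True, True, False] @ post"
        using M2v[OF v(1) d(2)] by blast
      have d': "derived R D'" using U2[OF D'(1)] D'(2) v(2) by simp
      then show False using False D'(3) by blast
    qed
    then have "psi lam R (pre @ [True, False, False, True] @ post) = 0" by (intro psi_no) blast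
    moreover have "psi lam R (pre @ [False, True, True, False] @ post) = 0" using False by (intro psi_no) blast
    ultimately show ?thesis by simp
  qed
  show ?thesis unfolding kcond_def using H K2 K3 by blast
qed

lemma ket_kcond: "kcond 7 lam (ket KK)"
proof -
  have H: "ket KK \<in> Hspace 7" unfolding Hspace_def ket_def by auto
  have K2: "ket KK (pre @ [True, b, True] @ post) = 0" for pre b post
  proof -
    have "KK \<noteq> pre @ [True, b, True] @ post"
    proof
      assume a: "KK = pre @ [True, b, True] @ post"
      have "length KK = length (pre @ [True, b, True] @ post)" using a by (rule arg_cong)
      then have l: "length pre < 5" by simp
      have "drop (length pre) KK = [True, b, True] @ post" using a by simp
      with l show False by (auto simp: less_Suc_eq numeral_eq_Suc)
    qed
    then show ?thesis unfolding ket_def by auto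
  qed
  have K3: "ket KK (pre @ [False, True, True, False] @ post) = lam * ket KK (pre @ [True, False, False, True] @ post)" for pre post
  proof -
    have n1: "KK \<noteq> pre @ [False, True, True, False] @ post"
    proof
      assume a: "KK = pre @ [False, True, True, False] @ post"
      have "length KK = length (pre @ [False, True, True, False] @ post)" using a by (rule arg_cong)
      then have l: "length pre < 4" by simp
      have "drop (length pre) KK = [False, True, True, False] @ post" using a by simp
      with l show False by (auto simp: less_Suc_eq numeral_eq_Suc)
    qed
    have n2: "KK \<noteq> pre @ [True, False, False, True] @ post"
    proof
      assume a: "KK = pre @ [True, False, False, True] @ post"
      have "length KK = length (pre @ [True, False, False, True] @ post)" using a by (rule arg_cong)
      then have l: "length pre < 4" by simp
      have "drop (length pre) KK = [True, False, False, True] @ post" using a by simp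
      with l show False by (auto simp: less_Suc_eq numeral_eq_Suc)
    qed
    show ?thesis using n1 n2 unfolding ket_def by (simp del: append.simps)
  qed
  show ?thesis unfolding kcond_def using H K2 K3 by blast
qed

lemma KK_untile: "vmd D \<Longrightarrow> content D = KK \<Longrightarrow> False"
  unfolding vmd_def by (auto dest: S1)

lemma nd_und_mid: "mid D \<Longrightarrow> ndimers (und D) = 0"
proof (induction D)
  case (Cons t D)
  have "mid D" using Cons.prems by (rule mid_tail)
  then have "ndimers (und D) = 0" using Cons.IH by simp
  moreover have "t \<noteq> LBDimer" using Cons.prems by (auto split: if_splits)
  ultimately show ?case by (subst und_Cons, cases t) (auto simp: ndimers_def)
qed (simp add: ndimers_def)

lemma W: "kcond n lam \<psi> \<Longrightarrow> mid D \<Longrightarrow> \<psi> (pre @ content D) = lam ^ ndimers D * \<psi> (pre @ content (und D))"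
proof (induction D arbitrary: pre)
  case Nil then show ?case by (simp add: ndimers_def)
next
  case (Cons t D)
  have K3: "\<And>pre post. \<psi> (pre @ [False, True, True, False] @ post) = lam * \<psi> (pre @ [True, False, False, True] @ post)"
    using Cons.prems(1) unfolding kcond_def by blast
  have mD: "mid D" using Cons.prems(2) by (rule mid_tail)
  have IH: "\<psi> ((pre @ word t) @ content D) = lam ^ ndimers D * \<psi> ((pre @ word t) @ content (und D))"
    using Cons.IH[OF Cons.prems(1) mD] .
  have DN: "t \<notin> {Void, Mono, Dimer} \<Longrightarrow> D = []" using Cons.prems(2) by (auto split: if_splits)
  have nLB: "t \<noteq> LBDimer" using Cons.prems(2) by (auto split: if_splits)
  show ?case
  proof (cases t)
    case Dimer
    have "\<psi> (pre @ content (Dimer # D)) = lam ^ ndimers D * \<psi> (pre @ [False, True, True, False] @ [False, False] @ content (und D))"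
      using IH Dimer by simp
    also have "\<dots> = lam ^ ndimers D * (lam * \<psi> (pre @ [True, False, False, True] @ [False, False] @ content (und D)))"
      using K3 by simp
    finally show ?thesis using Dimer by (simp add: ndimers_def)
  next
    case TDimer1
    then have "D = []" using DN by simp
    then show ?thesis using TDimer1 K3[of pre "[]"] by (simp add: ndimers_def)
  next
    case TDimer2
    then have "D = []" using DN by simp
    then show ?thesis using TDimer2 K3[of pre "[False]"] by (simp add: ndimers_def)
  qed (use IH nLB in \<open>simp_all add: ndimers_def\<close>)
qed

lemma Wv: "kcond n lam \<psi> \<Longrightarrow> vmd D \<Longrightarrow> \<psi> (content D) * lam ^ ndimers (und D) = lam ^ ndimers D * \<psi> (content (und D))"
proof -
  assume k: "kcond n lam \<psi>" and v: "vmd D"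
  from v show ?thesis
  proof (rule vmd_cases)
    assume m: "mid D"
    show ?thesis using W[OF k m, of "[]"] nd_und_mid[OF m] by simp
  next
    fix D' assume D: "D = LBDimer # D'" "mid D'"
    have "\<psi> ([True, True, False, False, False] @ content D') = lam ^ ndimers D' * \<psi> ([True, True, False, False, False] @ content (und D'))"
      using W[OF k D(2)] .
    then show ?thesis using D nd_und_mid[OF D(2)] by (simp add: ndimers_def)
  qed
qed

lemma kill:
  assumes k: "kcond n lam \<psi>" and l: "lam \<noteq> 0"
  shows "\<not> nopat \<sigma> \<Longrightarrow> \<sigma> \<noteq> KK \<Longrightarrow> \<psi> \<sigma> = 0"
proof -
  have K2: "\<And>pre b post. \<psi> (pre @ [True, b, True] @ post) = 0"
    and K3: "\<And>pre post. \<psi> (pre @ [False, True, True, False] @ post) = lam * \<psi> (pre @ [True, False, False, True] @ post)"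
    using k unfolding kcond_def by blast+
  have kp1: "\<psi> (pre @ [True, False, False, True, True] @ post) = 0" for pre post
  proof -
    have "\<psi> (pre @ [False, True, True, False] @ True # post) = 0" using K2[of "pre @ [False, True]" False post] by simp
    then have "lam * \<psi> (pre @ [True, False, False, True] @ True # post) = 0" using K3 by simp
    then show ?thesis using l by simp
  qed
  have kp2: "\<psi> (pre @ [True, True, False, False, True] @ post) = 0" for pre post
  proof -
    have "\<psi> ((pre @ [True]) @ [False, True, True, False] @ post) = 0" using K2[of pre False "[True, False] @ post"] by simp
    moreover have "\<psi> ((pre @ [True]) @ [False, True, True, False] @ post) = lam * \<psi> ((pre @ [True]) @ [True, False, False, True] @ post)"
      by (rule K3)
    ultimately have "lam * \<psi> ((pre @ [True]) @ [True, False, False, True] @ post) = 0" by simp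
    then show ?thesis using l by simp
  qed
  have kp3: "\<psi> (pre @ KK @ post) = 0" if ne: "pre \<noteq> [] \<or> post \<noteq> []" for pre post
  proof (cases "post = []")
    case False
    then obtain b post' where p: "post = b # post'" by (cases post) auto
    show ?thesis
    proof (cases b)
      case True
      then show ?thesis using K2[of "pre @ [True, True, False, False, False]" True post'] p by simp
    next
      case False
      have "\<psi> ((pre @ [True, True, False, False]) @ [False, True, True, False] @ post') =
            lam * \<psi> ((pre @ [True, True, False, False]) @ [True, False, False, True] @ post')" by (rule K3)
      moreover have "\<psi> ((pre @ [True, True, False, False]) @ [True, False, False, True] @ post') = 0"
        using kp2[of pre "[False, False, True] @ post'"] by simp
      ultimately show ?thesis using p False by simp
    qed
  next
    case True
    then have "pre \<noteq> []" using ne by simp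
    then obtain pre' b where p: "pre = pre' @ [b]" by (cases pre rule: rev_cases) auto
    show ?thesis
    proof (cases b)
      case True
      then show ?thesis using K2[of pre' True "[False, False, False, True, True] @ post"] p by simp
    next
      case False
      have "\<psi> (pre' @ [False, True, True, False] @ ([False, False, True, True] @ post)) =
            lam * \<psi> (pre' @ [True, False, False, True] @ ([False, False, True, True] @ post))" by (rule K3)
      moreover have "\<psi> (pre' @ [True, False, False, True] @ ([False, False, True, True] @ post)) = 0"
        using kp1[of "pre' @ [True, False, False]" post] by simp
      ultimately show ?thesis using p False by simp
    qed
  qed
  assume np: "\<not> nopat \<sigma>" and nK: "\<sigma> \<noteq> KK"
  from np have "(\<exists>pre b post. \<sigma> = pre @ [True, b, True] @ post)
     \<or> (\<exists>pre post. \<sigma> = pre @ [True, False, False, True, True] @ post)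
     \<or> (\<exists>pre post. \<sigma> = pre @ [True, True, False, False, True] @ post)
     \<or> (\<exists>pre post. \<sigma> = pre @ KK @ post)" unfolding nopat_def by blast
  then show "\<psi> \<sigma> = 0"
  proof (elim disjE exE)
    fix pre b post assume "\<sigma> = pre @ [True, b, True] @ post" then show ?thesis using K2 by simp
  next
    fix pre post assume "\<sigma> = pre @ [True, False, False, True, True] @ post" then show ?thesis using kp1 by simp
  next
    fix pre post assume "\<sigma> = pre @ [True, True, False, False, True] @ post" then show ?thesis using kp2 by simp
  next
    fix pre post assume s: "\<sigma> = pre @ KK @ post"
    then have "pre \<noteq> [] \<or> post \<noteq> []" using nK by auto
    then show ?thesis using kp3 s by blast
  qed
qed



lemma rep:
  assumes k: "kcond n lam \<psi>" and l: "lam \<noteq> 0" and n5: "5 \<le> n"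
  shows "\<psi> \<sigma> = (\<Sum>R\<in>roots n. (\<psi> (content R) / lam ^ ndimers R) * psi lam R \<sigma>) + \<psi> KK * ket KK \<sigma>"
proof -
  have H: "\<psi> \<in> Hspace n" using k unfolding kcond_def by blast
  have rootsD: "is_root R" "length (content R) = n" if "R \<in> roots n" for R using that by (auto simp: roots_def)
  show ?thesis
  proof (cases "length \<sigma> = n")
    case False
    have "psi lam R \<sigma> = 0" if "R \<in> roots n" for R
      using psi_kcond[OF that, of lam] False unfolding kcond_def Hspace_def by blast
    moreover have "\<psi> \<sigma> = 0" using Hspace_zero[OF H False] .
    moreover have "\<psi> KK * ket KK \<sigma> = 0" using \<open>\<psi> \<sigma> = 0\<close> by (cases "\<sigma> = KK") (auto simp: ket_def)
    ultimately show ?thesis by simp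
  next
    case len: True
    show ?thesis
    proof (cases "\<exists>D. vmd D \<and> content D = \<sigma>")
      case True
      then obtain D where D: "vmd D" "content D = \<sigma>" by blast
      define R0 where "R0 = und D"
      have r0: "is_root R0" "derived R0 D" using U2[OF D(1)] R0_def by auto
      have R0in: "R0 \<in> roots n" unfolding roots_def R0_def using r0(1) len_und[of D] D(2) len R0_def by simp
      have others: "psi lam R \<sigma> = 0" if "R \<in> roots n - {R0}" for R
      proof (rule psi_no)
        fix D2 assume d2: "derived R D2"
        have "vmd D2" "und D2 = R" using U1[OF rootsD(1) d2] that by auto
        show "content D2 \<noteq> \<sigma>"
        proof
          assume "content D2 = \<sigma>"
          then have "D2 = D" using vmd_inj \<open>vmd D2\<close> D by metis
          then show False using \<open>und D2 = R\<close> R0_def that by auto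
        qed
      qed
      have "(\<Sum>R\<in>roots n. (\<psi> (content R) / lam ^ ndimers R) * psi lam R \<sigma>)
          = (\<psi> (content R0) / lam ^ ndimers R0) * psi lam R0 \<sigma>
            + (\<Sum>R\<in>roots n - {R0}. (\<psi> (content R) / lam ^ ndimers R) * psi lam R \<sigma>)"
        using sum.remove[OF finite_roots R0in] by blast
      also have "(\<Sum>R\<in>roots n - {R0}. (\<psi> (content R) / lam ^ ndimers R) * psi lam R \<sigma>) = 0"
        using others by simp
      also have "psi lam R0 \<sigma> = lam ^ ndimers D" using psi_yes[OF r0] D(2) by simp
      finally have S: "(\<Sum>R\<in>roots n. (\<psi> (content R) / lam ^ ndimers R) * psi lam R \<sigma>) = (\<psi> (content R0) / lam ^ ndimers R0) * lam ^ ndimers D" by simp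
      have Wq: "\<psi> \<sigma> * lam ^ ndimers R0 = lam ^ ndimers D * \<psi> (content R0)"
        using Wv[OF k D(1)] D(2) R0_def by simp
      have "\<sigma> \<noteq> KK" using KK_untile D by blast
      then have "ket KK \<sigma> = 0" by (simp add: ket_def)
      moreover have "\<psi> \<sigma> = (\<psi> (content R0) / lam ^ ndimers R0) * lam ^ ndimers D"
        using Wq l by (simp add: field_simps)
      ultimately show ?thesis using S by simp
    next
      case False
      have z: "psi lam R \<sigma> = 0" if "R \<in> roots n" for R
      proof (rule psi_no)
        fix D2 assume d2: "derived R D2"
        have "vmd D2" using U1[OF rootsD(1)[OF that] d2] by blast
        then show "content D2 \<noteq> \<sigma>" using False by blast
      qed
      show ?thesis
      proof (cases "\<sigma> = KK")
        case True
        then show ?thesis using z by (simp add: ket_def)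
      next
        case nK: False
        have "\<not> nopat \<sigma>" using PL[of \<sigma>] len n5 False by auto
        then have "\<psi> \<sigma> = 0" using kill[OF k l] nK by blast
        then show ?thesis using z nK by (simp add: ket_def)
      qed
    qed
  qed
qed

lemma psi_KK: assumes "R \<in> roots n" shows "psi lam R KK = 0"
proof (rule psi_no)
  fix D assume d: "derived R D"
  have "is_root R" using assms by (simp add: roots_def)
  then have "vmd D" using U1 d by blast
  then show "content D \<noteq> KK" using KK_untile by blast
qed

theorem theorem2p15:
  fixes \<kappa> :: real and lam :: complex
  assumes "\<kappa> > 0" and "lam \<noteq> 0"
  shows "(\<forall>n. (n \<ge> 8 \<or> n = 5 \<or> n = 6) \<longrightarrow> kerH n \<kappa> lam = Gspace n lam)
       \<and> (kerH 7 \<kappa> lam = cspan (psi lam ` roots 7 \<union> {ket [True, True, False, False, False, True, True]})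
          \<and> Gspace 7 lam \<inter> cspan {ket [True, True, False, False, False, True, True]} = {\<lambda>_. 0})"
proof (intro conjI allI impI)
  fix n :: nat assume n: "n \<ge> 8 \<or> n = 5 \<or> n = 6"
  then have n5: "5 \<le> n" by auto
  show "kerH n \<kappa> lam = Gspace n lam"
  proof
    show "kerH n \<kappa> lam \<subseteq> Gspace n lam"
    proof
      fix \<psi> assume "\<psi> \<in> kerH n \<kappa> lam"
      then have k: "kcond n lam \<psi>" using ker_kcond assms(1) by blast
      have "\<psi> KK = 0" using k n unfolding kcond_def Hspace_def by auto
      have "\<psi> = (\<lambda>\<sigma>. \<Sum>R\<in>roots n. (\<psi> (content R) / lam ^ ndimers R) * psi lam R \<sigma>)"
      proof (rule ext)
        fix \<sigma> show "\<psi> \<sigma> = (\<Sum>R\<in>roots n. (\<psi> (content R) / lam ^ ndimers R) * psi lam R \<sigma>)"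
          using rep[OF k assms(2) n5, of \<sigma>] \<open>\<psi> KK = 0\<close> by simp
      qed
      also have "\<dots> \<in> Gspace n lam" unfolding Gspace_def
        by (rule cspan_sum[OF finite_roots]) (rule cspan_base, simp)
      finally show "\<psi> \<in> Gspace n lam" .
    qed
  next
    show "Gspace n lam \<subseteq> kerH n \<kappa> lam"
    proof
      fix v assume "v \<in> Gspace n lam"
      then have "kcond n lam v" unfolding Gspace_def
        by (rule kcond_cspan[rotated]) (auto intro: psi_kcond)
      then show "v \<in> kerH n \<kappa> lam" by (rule kcond_ker)
    qed
  qed
next
  show "kerH 7 \<kappa> lam = cspan (psi lam ` roots 7 \<union> {ket KK})"
  proof
    show "kerH 7 \<kappa> lam \<subseteq> cspan (psi lam ` roots 7 \<union> {ket KK})"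
    proof
      fix \<psi> assume "\<psi> \<in> kerH 7 \<kappa> lam"
      then have k: "kcond 7 lam \<psi>" using ker_kcond assms(1) by blast
      have "\<psi> = (\<lambda>\<sigma>. (\<Sum>R\<in>roots 7. (\<psi> (content R) / lam ^ ndimers R) * psi lam R \<sigma>) + \<psi> KK * ket KK \<sigma>)"
      proof (rule ext)
        fix \<sigma> show "\<psi> \<sigma> = (\<Sum>R\<in>roots 7. (\<psi> (content R) / lam ^ ndimers R) * psi lam R \<sigma>) + \<psi> KK * ket KK \<sigma>"
          using rep[OF k assms(2), of \<sigma>] by simp
      qed
      also have "\<dots> \<in> cspan (psi lam ` roots 7 \<union> {ket KK})"
      proof -
        let ?S = "psi lam ` roots 7 \<union> {ket KK}"
        have a: "(\<lambda>\<sigma>. \<Sum>R\<in>roots 7. (\<psi> (content R) / lam ^ ndimers R) * psi lam R \<sigma>) \<in> cspan ?S"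
          by (rule cspan_sum[OF finite_roots]) (rule cspan_base, simp)
        have b: "ket KK \<in> cspan ?S" by (rule cspan_base) simp
        show ?thesis using cspan_add[OF a cspan_smult[OF b, of "\<psi> KK"]] by simp
      qed
      finally show "\<psi> \<in> cspan (psi lam ` roots 7 \<union> {ket KK})" .
    qed
  next
    show "cspan (psi lam ` roots 7 \<union> {ket KK}) \<subseteq> kerH 7 \<kappa> lam"
    proof
      fix v assume "v \<in> cspan (psi lam ` roots 7 \<union> {ket KK})"
      then have "kcond 7 lam v"
        by (rule kcond_cspan[rotated]) (auto intro: psi_kcond ket_kcond)
      then show "v \<in> kerH 7 \<kappa> lam" by (rule kcond_ker)
    qed
  qed
next
  show "Gspace 7 lam \<inter> cspan {ket KK} = {\<lambda>_. 0}"
  proof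
    show "Gspace 7 lam \<inter> cspan {ket KK} \<subseteq> {\<lambda>_. 0}"
    proof
      fix v assume v: "v \<in> Gspace 7 lam \<inter> cspan {ket KK}"
      then obtain F c where F: "finite F" "F \<subseteq> psi lam ` roots 7" "v = (\<lambda>\<sigma>. \<Sum>u\<in>F. c u * u \<sigma>)"
        unfolding Gspace_def cspan_def by blast
      have vK: "v KK = 0" unfolding F(3)
        by (rule sum.neutral) (use F(2) psi_KK in fastforce)
      from v obtain F' c' where F': "finite F'" "F' \<subseteq> {ket KK}" "v = (\<lambda>\<sigma>. \<Sum>u\<in>F'. c' u * u \<sigma>)"
        unfolding cspan_def by blast
      show "v \<in> {\<lambda>_. 0}"
      proof (cases "F' = {}")
        case True then show ?thesis using F'(3) by simp
      next
        case False
        then have "F' = {ket KK}" using F'(2) by blast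
        then have vv: "v = (\<lambda>\<sigma>. c' (ket KK) * ket KK \<sigma>)" using F'(3) by simp
        then have "c' (ket KK) = 0" using vK by (simp add: ket_def)
        then show ?thesis using vv by simp
      qed
    qed
  next
    show "{\<lambda>_. 0} \<subseteq> Gspace 7 lam \<inter> cspan {ket KK}"
      using cspan_zero unfolding Gspace_def by blast
  qed
qed

end
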